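(* Assume $L/F$ is unramified and $n\ge1$. Then $\dim\pi_{\tau,\chi}^{K_n}\le q^a$, where $a=n$ if $c-n$ is even and $a=n-1$ if $c-n$ is odd.
   Context: $F$ is a $p$-adic field with $p\ne2$, ring of integers $\mathcal O$ with maximal ideal $\mathfrak p$, residue field of order $q$. $L/F$ is a quadratic extension with ring of integers $\mathcal O_L$, maximal ideal $\mathfrak p_L$, conjugation $x\mapsto\overline x$, norm $N:L\to F$, $L^1=\ker N$; $\omega$ is the nontrivial character of $F^\times/N(L^\times)$. $\chi$ is a character of $L^\times$ not factoring through $N$. $\tau$ is a nontrivial additive character of $F$ with conductor $\mathfrak p^c$, i.e. $\tau$ is trivial on $\mathfrak p^m$ iff $m\ge c$. Put $\langle x,y\rangle=\tau(\operatorname{tr}_{L/F}(xy))$ and $\widehat\Phi(x)=\int_L\Phi(y)\langle x,y\rangle\,dy$ for Schwartz functions $\Phi$ on $L$, with Haar measure normalized so that $\widehat{\widehat\Phi}(x)=\Phi(-x)$. $\mathcal S(L)_\chi$ is the space of Schwartz functions with $\Phi(xy)=\chi(y)^{-1}\Phi(x)$ for $y\in L^1$. $G_+=\{g\in GL_2(F):\det g\in N(L^\times)\}$, and $\pi_{\tau,\chi}$ is the irreducible representation of $G_+$ on $\mathcal S(L)_\chi$ satisfying $\pi_{\tau,\chi}\begin{pmatrix}1&u\\0&1\end{pmatrix}\Phi(x)=\tau(uN(x))\Phi(x)$, $\pi_{\tau,\chi}\begin{pmatrix}a&0\\0&a^{-1}\end{pmatrix}\Phi(x)=\omega(a)|a|_L^{1/2}\Phi(ax)$,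 $\pi_{\tau,\chi}\begin{pmatrix}0&1\\-1&0\end{pmatrix}\Phi(x)=\gamma\widehat\Phi(\overline x)$ for some complex $\gamma$ with $|\gamma|=1$. $K_n$ is the principal congruence subgroup of $GL_2(F)$ of level $n$ (contained in $G_+$ for $n\ge1$). *)

theory Defs
  imports Complex_Main
begin

text \<open>F is a field type 'f with a normalized discrete valuation v (the value at 0 is
irrelevant; membership in the ideals p^m treats 0 separately).\<close>

definition PF :: "('f::field \<Rightarrow> int) \<Rightarrow> int \<Rightarrow> 'f set" where
  "PF v m = {x. x = 0 \<or> m \<le> v x}"

definition OF :: "('f::field \<Rightarrow> int) \<Rightarrow> 'f set" where
  "OF v = PF v 0"

definition residue_classes :: "('f::field \<Rightarrow> int) \<Rightarrow> 'f set set" where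
  "residue_classes v = (\<lambda>x. {y \<in> OF v. x - y \<in> PF v 1}) ` OF v"

text \<open>p-adic field (finite extension of Q_p): characteristic 0, complete w.r.t. a
normalized discrete valuation, finite residue field of order q; residue characteristic
odd (p \<noteq> 2) is expressed as q odd.\<close>
definition padic_field :: "('f::field \<Rightarrow> int) \<Rightarrow> nat \<Rightarrow> bool" where
  "padic_field v q \<longleftrightarrow>
     (\<forall>x y. x \<noteq> 0 \<longrightarrow> y \<noteq> 0 \<longrightarrow> v (x * y) = v x + v y) \<and>
     (\<forall>x y. x \<noteq> 0 \<longrightarrow> y \<noteq> 0 \<longrightarrow> x + y \<noteq> 0 \<longrightarrow> min (v x) (v y) \<le> v (x + y)) \<and>
     (\<exists>w. w \<noteq> 0 \<and> v w = 1) \<and>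
     (\<forall>k::nat. 0 < k \<longrightarrow> of_nat k \<noteq> (0::'f)) \<and>
     (\<forall>s::nat \<Rightarrow> 'f. (\<forall>M. \<exists>N. \<forall>i\<ge>N. \<forall>j\<ge>N. s i - s j \<in> PF v M) \<longrightarrow>
        (\<exists>l. \<forall>M. \<exists>N. \<forall>i\<ge>N. s i - l \<in> PF v M)) \<and>
     card (residue_classes v) = q \<and> 1 < q \<and> odd q"

text \<open>Since p is odd, the unramified quadratic extension is L = F(sqrt e) for a unit e
which is a non-square modulo p. Elements of L are pairs (a,b) = a + b sqrt e.\<close>
definition unram_param :: "('f::field \<Rightarrow> int) \<Rightarrow> 'f \<Rightarrow> bool" where
  "unram_param v e \<longleftrightarrow> e \<noteq> 0 \<and> v e = 0 \<and> \<not> (\<exists>y \<in> OF v. y * y - e \<in> PF v 1)"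

definition lmul :: "'f::field \<Rightarrow> 'f \<times> 'f \<Rightarrow> 'f \<times> 'f \<Rightarrow> 'f \<times> 'f" where
  "lmul e x y = (fst x * fst y + e * snd x * snd y, fst x * snd y + snd x * fst y)"

definition lsub :: "'f::field \<times> 'f \<Rightarrow> 'f \<times> 'f \<Rightarrow> 'f \<times> 'f" where
  "lsub x y = (fst x - fst y, snd x - snd y)"

definition lneg :: "'f::field \<times> 'f \<Rightarrow> 'f \<times> 'f" where
  "lneg x = (- fst x, - snd x)"

definition lconj :: "'f::field \<times> 'f \<Rightarrow> 'f \<times> 'f" where
  "lconj x = (fst x, - snd x)"

definition lscal :: "'f::field \<Rightarrow> 'f \<times> 'f \<Rightarrow> 'f \<times> 'f" where
  "lscal a x = (a * fst x, a * snd x)"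

definition lnorm :: "'f::field \<Rightarrow> 'f \<times> 'f \<Rightarrow> 'f" where
  "lnorm e x = fst x * fst x - e * snd x * snd x"

definition ltr :: "'f::field \<times> 'f \<Rightarrow> 'f" where
  "ltr x = 2 * fst x"

text \<open>p_L^m = p^m O_L (L/F unramified, O_L = O + O sqrt e).\<close>
definition PL :: "('f::field \<Rightarrow> int) \<Rightarrow> int \<Rightarrow> ('f \<times> 'f) set" where
  "PL v m = PF v m \<times> PF v m"

definition omega :: "'f::field \<Rightarrow> 'f \<Rightarrow> complex" where
  "omega e a = (if \<exists>y. y \<noteq> (0,0) \<and> a = lnorm e y then 1 else -1)"

text \<open>|a|_L for a in F^x: normalized absolute value of L, q_L = q^2.\<close>
definition absL_F :: "('f::field \<Rightarrow> int) \<Rightarrow> nat \<Rightarrow> 'f \<Rightarrow> real" where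
  "absL_F v q a = (real q ^ 2) powr (- real_of_int (v a))"

definition additive_char_conductor ::
  "('f::field \<Rightarrow> int) \<Rightarrow> ('f \<Rightarrow> complex) \<Rightarrow> int \<Rightarrow> bool" where
  "additive_char_conductor v tau c \<longleftrightarrow>
     (\<forall>x y. tau (x + y) = tau x * tau y) \<and> (\<forall>x. tau x \<noteq> 0) \<and>
     (\<forall>m. (\<forall>x \<in> PF v m. tau x = 1) \<longleftrightarrow> c \<le> m)"

definition char_L :: "('f::field \<Rightarrow> int) \<Rightarrow> 'f \<Rightarrow> ('f \<times> 'f \<Rightarrow> complex) \<Rightarrow> bool" where
  "char_L v e chi \<longleftrightarrow>
     (\<forall>x. x \<noteq> (0,0) \<longrightarrow> chi x \<noteq> 0) \<and>
     (\<forall>x y. x \<noteq> (0,0) \<longrightarrow> y \<noteq> (0,0) \<longrightarrow> chi (lmul e x y) = chi x * chi y) \<and>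
     (\<exists>m\<ge>1. \<forall>x. lsub x (1,0) \<in> PL v m \<longrightarrow> chi x = 1)"

definition factors_through_norm :: "'f::field \<Rightarrow> ('f \<times> 'f \<Rightarrow> complex) \<Rightarrow> bool" where
  "factors_through_norm e chi \<longleftrightarrow> (\<exists>mu. \<forall>y. y \<noteq> (0,0) \<longrightarrow> chi y = mu (lnorm e y))"

definition schwartz :: "('f::field \<Rightarrow> int) \<Rightarrow> ('f \<times> 'f \<Rightarrow> complex) \<Rightarrow> bool" where
  "schwartz v Phi \<longleftrightarrow> (\<exists>m k. (\<forall>x. x \<notin> PL v (- k) \<longrightarrow> Phi x = 0) \<and>
                              (\<forall>x y. lsub x y \<in> PL v m \<longrightarrow> Phi x = Phi y))"

definition schwartz_chi ::
  "('f::field \<Rightarrow> int) \<Rightarrow> 'f \<Rightarrow> ('f \<times> 'f \<Rightarrow> complex) \<Rightarrow> ('f \<times> 'f \<Rightarrow> complex) set" where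
  "schwartz_chi v e chi = {Phi. schwartz v Phi \<and>
      (\<forall>x y. lnorm e y = 1 \<longrightarrow> Phi (lmul e x y) = inverse (chi y) * Phi x)}"

definition cosetL :: "('f::field \<Rightarrow> int) \<Rightarrow> int \<Rightarrow> 'f \<times> 'f \<Rightarrow> ('f \<times> 'f) set" where
  "cosetL v m x = {y. lsub y x \<in> PL v m}"

text \<open>Riemann sum for a function constant on cosets of p_L^m and supported in p_L^(-k),
w.r.t. the Haar measure with vol(O_L) = 1 (so vol(p_L^m) = q^(-2m)).\<close>
definition level_sum ::
  "('f::field \<Rightarrow> int) \<Rightarrow> nat \<Rightarrow> int \<Rightarrow> int \<Rightarrow> ('f \<times> 'f \<Rightarrow> complex) \<Rightarrow> complex" where
  "level_sum v q m k Phi =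
     (\<Sum>C \<in> cosetL v m ` PL v (- k). Phi (SOME x. x \<in> C)) *
     complex_of_real (real q powr (- 2 * real_of_int m))"

definition integral0 :: "('f::field \<Rightarrow> int) \<Rightarrow> nat \<Rightarrow> ('f \<times> 'f \<Rightarrow> complex) \<Rightarrow> complex" where
  "integral0 v q Phi = (THE I. \<forall>m k. - k \<le> m \<longrightarrow>
       (\<forall>x. x \<notin> PL v (- k) \<longrightarrow> Phi x = 0) \<longrightarrow>
       (\<forall>x y. lsub x y \<in> PL v m \<longrightarrow> Phi x = Phi y) \<longrightarrow> I = level_sum v q m k Phi)"

definition pairing :: "'f::field \<Rightarrow> ('f \<Rightarrow> complex) \<Rightarrow> 'f \<times> 'f \<Rightarrow> 'f \<times> 'f \<Rightarrow> complex" where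
  "pairing e tau x y = tau (ltr (lmul e x y))"

text \<open>Fourier transform w.r.t. the Haar measure lam * (measure with vol(O_L)=1).\<close>
definition fourier ::
  "('f::field \<Rightarrow> int) \<Rightarrow> nat \<Rightarrow> 'f \<Rightarrow> ('f \<Rightarrow> complex) \<Rightarrow> real \<Rightarrow>
   ('f \<times> 'f \<Rightarrow> complex) \<Rightarrow> ('f \<times> 'f \<Rightarrow> complex)" where
  "fourier v q e tau lam Phi =
     (\<lambda>x. complex_of_real lam * integral0 v q (\<lambda>y. Phi y * pairing e tau x y))"

definition selfdual_measure ::
  "('f::field \<Rightarrow> int) \<Rightarrow> nat \<Rightarrow> 'f \<Rightarrow> ('f \<Rightarrow> complex) \<Rightarrow> real \<Rightarrow> bool" where
  "selfdual_measure v q e tau lam \<longleftrightarrow> 0 < lam \<and>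
     (\<forall>Phi. schwartz v Phi \<longrightarrow>
        (\<forall>x. fourier v q e tau lam (fourier v q e tau lam Phi) x = Phi (lneg x)))"

text \<open>(a,b,c,d) stands for the matrix [[a,b],[c,d]].\<close>
type_synonym 'f mat2 = "'f \<times> 'f \<times> 'f \<times> 'f"

fun mmul :: "'f::field mat2 \<Rightarrow> 'f mat2 \<Rightarrow> 'f mat2" where
  "mmul (a, b, c, d) (a', b', c', d') =
     (a * a' + b * c', a * b' + b * d', c * a' + d * c', c * b' + d * d')"

fun det2 :: "'f::field mat2 \<Rightarrow> 'f" where
  "det2 (a, b, c, d) = a * d - b * c"

definition Gplus :: "'f::field \<Rightarrow> 'f mat2 set" where
  "Gplus e = {g. \<exists>y. y \<noteq> (0,0) \<and> det2 g = lnorm e y}"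

definition Kcong :: "('f::field \<Rightarrow> int) \<Rightarrow> nat \<Rightarrow> 'f mat2 set" where
  "Kcong v n = {(a, b, c, d). a - 1 \<in> PF v (int n) \<and> b \<in> PF v (int n) \<and>
                              c \<in> PF v (int n) \<and> d - 1 \<in> PF v (int n)}"

definition weil_rep ::
  "('f::field \<Rightarrow> int) \<Rightarrow> nat \<Rightarrow> 'f \<Rightarrow> ('f \<Rightarrow> complex) \<Rightarrow> ('f \<times> 'f \<Rightarrow> complex) \<Rightarrow> real \<Rightarrow>
   ('f mat2 \<Rightarrow> ('f \<times> 'f \<Rightarrow> complex) \<Rightarrow> ('f \<times> 'f \<Rightarrow> complex)) \<Rightarrow> bool" where
  "weil_rep v q e tau chi lam rho \<longleftrightarrow>
     (let S = schwartz_chi v e chi in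
       (\<forall>g \<in> Gplus e. \<forall>Phi \<in> S. rho g Phi \<in> S) \<and>
       (\<forall>g \<in> Gplus e. \<forall>Phi \<in> S. \<forall>Psi \<in> S. \<forall>a.
           rho g (\<lambda>x. a * Phi x + Psi x) = (\<lambda>x. a * rho g Phi x + rho g Psi x)) \<and>
       (\<forall>Phi \<in> S. rho (1, 0, 0, 1) Phi = Phi) \<and>
       (\<forall>g \<in> Gplus e. \<forall>h \<in> Gplus e. \<forall>Phi \<in> S. rho (mmul g h) Phi = rho g (rho h Phi)) \<and>
       (\<exists>Phi \<in> S. Phi \<noteq> (\<lambda>_. 0)) \<and>
       (\<forall>W. W \<subseteq> S \<longrightarrow> (\<lambda>_. 0) \<in> W \<longrightarrow>
            (\<forall>Phi \<in> W. \<forall>Psi \<in> W. \<forall>a. (\<lambda>x. a * Phi x + Psi x) \<in> W) \<longrightarrow>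
            (\<forall>g \<in> Gplus e. \<forall>Phi \<in> W. rho g Phi \<in> W) \<longrightarrow>
            W = {\<lambda>_. 0} \<or> W = S) \<and>
       (\<forall>u. \<forall>Phi \<in> S. rho (1, u, 0, 1) Phi = (\<lambda>x. tau (u * lnorm e x) * Phi x)) \<and>
       (\<forall>a. a \<noteq> 0 \<longrightarrow> (\<forall>Phi \<in> S. rho (a, 0, 0, inverse a) Phi =
            (\<lambda>x. omega e a * complex_of_real (sqrt (absL_F v q a)) * Phi (lscal a x)))) \<and>
       (\<exists>gamma. cmod gamma = 1 \<and>
          (\<forall>Phi \<in> S. rho (0, 1, -1, 0) Phi = (\<lambda>x. gamma * fourier v q e tau lam Phi (lconj x)))))"

definition fixed_vectors ::
  "('f::field \<Rightarrow> int) \<Rightarrow> 'f \<Rightarrow> ('f \<times> 'f \<Rightarrow> complex) \<Rightarrow>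
   ('f mat2 \<Rightarrow> ('f \<times> 'f \<Rightarrow> complex) \<Rightarrow> ('f \<times> 'f \<Rightarrow> complex)) \<Rightarrow> nat \<Rightarrow>
   ('f \<times> 'f \<Rightarrow> complex) set" where
  "fixed_vectors v e chi rho n = {Phi \<in> schwartz_chi v e chi. \<forall>g \<in> Kcong v n. rho g Phi = Phi}"

definition lin_indep_fun :: "('a \<Rightarrow> complex) set \<Rightarrow> bool" where
  "lin_indep_fun B \<longleftrightarrow> (\<forall>u. (\<lambda>x. \<Sum>Phi\<in>B. u Phi * Phi x) = (\<lambda>_. 0) \<longrightarrow> (\<forall>Phi\<in>B. u Phi = 0))"

end

theory Submission
  imports Defs "HOL-Library.Function_Algebras"
begin
lemma sum_fun_apply: "(\<Sum>i\<in>A. f i) x = (\<Sum>i\<in>A. (f i x :: 'b::comm_monoid_add))"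
  by (induction A rule: infinite_finite_induct) (auto simp: zero_fun_def plus_fun_def)

lemma LA_bound:
  fixes B :: "('a \<Rightarrow> complex) set" and R :: "'a set"
  assumes fB: "finite B" and fR: "finite R" and li: "lin_indep_fun B"
    and det: "\<forall>x. \<exists>c. \<exists>r\<in>R. \<forall>Phi\<in>B. Phi x = c * Phi r"
  shows "card B \<le> card R"
proof -
  interpret vs: vector_space "\<lambda>(c::complex) (f::'a \<Rightarrow> complex). \<lambda>x. c * f x"
    by unfold_locales (auto simp: plus_fun_def algebra_simps)
  have key: "\<forall>Phi\<in>B. u Phi = 0" if h: "\<forall>r\<in>R. (\<Sum>Phi\<in>B. u Phi * Phi r) = 0" for u
  proof -
    have "(\<lambda>x. \<Sum>Phi\<in>B. u Phi * Phi x) = (\<lambda>_. 0)"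
    proof
      fix x
      obtain c r where r: "r \<in> R" and cr: "\<forall>Phi\<in>B. Phi x = c * Phi r" using det by blast
      have "(\<Sum>Phi\<in>B. u Phi * Phi x) = (\<Sum>Phi\<in>B. c * (u Phi * Phi r))"
        by (rule sum.cong) (auto simp: cr)
      also have "\<dots> = c * (\<Sum>Phi\<in>B. u Phi * Phi r)" by (simp add: sum_distrib_left)
      also have "\<dots> = 0" using h r by simp
      finally show "(\<Sum>Phi\<in>B. u Phi * Phi x) = 0" .
    qed
    then show ?thesis using li unfolding lin_indep_fun_def by blast
  qed
  define rho where "rho = (\<lambda>Phi::'a\<Rightarrow>complex. \<lambda>x. if x \<in> R then Phi x else 0)"
  define dl where "dl = (\<lambda>r::'a. \<lambda>x. if x = r then (1::complex) else 0)"
  have inj: "inj_on rho B"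
  proof (rule inj_onI, rule ccontr)
    fix P1 P2 assume P: "P1 \<in> B" "P2 \<in> B" "rho P1 = rho P2" "P1 \<noteq> P2"
    define u where "u = (\<lambda>Phi. if Phi = P1 then (1::complex) else if Phi = P2 then -1 else 0)"
    have "\<forall>r\<in>R. (\<Sum>Phi\<in>B. u Phi * Phi r) = 0"
    proof
      fix r assume r: "r \<in> R"
      have "P1 r = P2 r" using fun_cong[OF P(3), of r] r by (simp add: rho_def)
      have "(\<Sum>Phi\<in>B. u Phi * Phi r) = (\<Sum>Phi\<in>{P1,P2}. u Phi * Phi r)"
        by (rule sum.mono_neutral_right) (use fB P in \<open>auto simp: u_def\<close>)
      also have "\<dots> = 0" using P \<open>P1 r = P2 r\<close> by (simp add: u_def)
      finally show "(\<Sum>Phi\<in>B. u Phi * Phi r) = 0" .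
    qed
    then have "u P1 = 0" using key P by blast
    then show False by (simp add: u_def)
  qed
  have ind: "vs.independent (rho ` B)"
  proof
    assume "vs.dependent (rho ` B)"
    then obtain t u where t: "finite t" "t \<subseteq> rho ` B"
      and s: "(\<Sum>w\<in>t. (\<lambda>x. u w * w x)) = 0" and w: "\<exists>w\<in>t. u w \<noteq> 0"
      unfolding vs.dependent_explicit by blast
    define u' where "u' = (\<lambda>Phi. if rho Phi \<in> t then u (rho Phi) else 0)"
    have "\<forall>r\<in>R. (\<Sum>Phi\<in>B. u' Phi * Phi r) = 0"
    proof
      fix r assume r: "r \<in> R"
      have "(\<Sum>Phi\<in>B. u' Phi * Phi r) = (\<Sum>Phi\<in>B \<inter> rho -` t. u (rho Phi) * rho Phi r)"
        by (rule sum.mono_neutral_cong_right) (use fB r in \<open>auto simp: u'_def rho_def\<close>)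
      also have "\<dots> = (\<Sum>w\<in>rho ` (B \<inter> rho -` t). u w * w r)"
        by (rule sum.reindex_cong[symmetric]) (use inj in \<open>auto intro: inj_on_subset\<close>)
      also have "rho ` (B \<inter> rho -` t) = t" using t by auto
      also have "(\<Sum>w\<in>t. u w * w r) = (\<Sum>w\<in>t. (\<lambda>x. u w * w x)) r"
        by (simp add: sum_fun_apply)
      also have "\<dots> = 0" using s by simp
      finally show "(\<Sum>Phi\<in>B. u' Phi * Phi r) = 0" .
    qed
    then have "\<forall>Phi\<in>B. u' Phi = 0" using key by blast
    moreover obtain w0 where "w0 \<in> t" "u w0 \<noteq> 0" using w by blast
    moreover then obtain P0 where "P0 \<in> B" "w0 = rho P0" using t by blast
    ultimately show False by (auto simp: u'_def)
  qed
  have sp: "rho ` B \<subseteq> vs.span (dl ` R)"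
  proof
    fix f assume "f \<in> rho ` B"
    then obtain Phi where f: "f = rho Phi" by blast
    have "f = (\<Sum>r\<in>R. (\<lambda>x. Phi r * dl r x))"
    proof
      fix x
      have "(\<Sum>r\<in>R. (\<lambda>x. Phi r * dl r x)) x = (\<Sum>r\<in>R. Phi r * dl r x)" by (simp add: sum_fun_apply)
      also have "\<dots> = (if x \<in> R then Phi x else 0)"
        using fR by (simp add: dl_def if_distrib[of "\<lambda>y. _ * y"] sum.delta' cong: if_cong)
      finally show "f x = (\<Sum>r\<in>R. (\<lambda>x. Phi r * dl r x)) x" by (simp add: f rho_def)
    qed
    also have "\<dots> \<in> vs.span (dl ` R)"
    proof (rule vs.span_sum)
      fix r assume "r \<in> R"
      then have "dl r \<in> vs.span (dl ` R)" by (intro vs.span_base) auto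
      from vs.span_scale[OF this, of "Phi r"] show "(\<lambda>x. Phi r * dl r x) \<in> vs.span (dl ` R)" by simp
    qed
    finally show "f \<in> vs.span (dl ` R)" .
  qed
  have "card (rho ` B) \<le> card (dl ` R)" using vs.independent_span_bound[OF _ ind sp] fR by auto
  also have "\<dots> \<le> card R" by (rule card_image_le[OF fR])
  finally show ?thesis using card_image[OF inj] by simp
qed

lemma even_card_involution:
  assumes "finite A" "\<forall>x\<in>A. f x \<in> A" "\<forall>x\<in>A. f (f x) = x" "\<forall>x\<in>A. f x \<noteq> x"
  shows "even (card A)"
  using assms
proof (induction "card A" arbitrary: A rule: less_induct)
  case less
  show ?case
  proof (cases "A = {}")
    case True then show ?thesis by simp
  next
    case False
    then obtain x where x: "x \<in> A" by blast
    let ?A' = "A - {x, f x}"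
    have fx: "f x \<in> A" "f x \<noteq> x" using less x by auto
    have sub: "{x, f x} \<subseteq> A" using x fx by auto
    have c2: "card {x, f x} = 2" using fx by simp
    have "card ?A' = card A - 2" using card_Diff_subset[OF _ sub] c2 by simp
    moreover have "2 \<le> card A" using card_mono[OF less(2) sub] c2 by simp
    ultimately have c: "card A = card ?A' + 2" by simp
    have "even (card ?A')"
    proof (rule less(1))
      show "card ?A' < card A" using c by simp
      show "finite ?A'" using less(2) by simp
      show "\<forall>y\<in>?A'. f y \<in> ?A'"
      proof
        fix y assume y: "y \<in> ?A'"
        have "f y \<in> A" using less(3) y by auto
        moreover have "f y \<noteq> x" using less(4) y by (metis DiffD1 DiffD2 insertI2 singletonI)
        moreover have "f y \<noteq> f x" using less(4) y x by (metis DiffD1 DiffD2 insertI1)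
        ultimately show "f y \<in> ?A'" by simp
      qed
      show "\<forall>y\<in>?A'. f (f y) = y" using less(4) by auto
      show "\<forall>y\<in>?A'. f y \<noteq> y" using less(5) by auto
    qed
    then show ?thesis using c by simp
  qed
qed

locale pfield =
  fixes v :: "'f::field \<Rightarrow> int" and q :: nat
  assumes pf: "padic_field v q"
begin

lemma vmult: "x \<noteq> 0 \<Longrightarrow> y \<noteq> 0 \<Longrightarrow> v (x * y) = v x + v y"
  using pf unfolding padic_field_def by blast

lemma vadd: "x \<noteq> 0 \<Longrightarrow> y \<noteq> 0 \<Longrightarrow> x + y \<noteq> 0 \<Longrightarrow> min (v x) (v y) \<le> v (x + y)"
  using pf unfolding padic_field_def by blast

lemma char0: "0 < k \<Longrightarrow> (of_nat k :: 'f) \<noteq> 0"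
  using pf unfolding padic_field_def by blast

lemma two_nz: "(2::'f) \<noteq> 0"
  using char0[of 2] by simp

lemma unif: "\<exists>w. w \<noteq> 0 \<and> v w = 1"
  using pf unfolding padic_field_def by blast

lemma q_props: "card (residue_classes v) = q" "1 < q" "odd q"
  using pf unfolding padic_field_def by blast+

lemma v1: "v 1 = 0"
  using vmult[of 1 1] by simp

lemma vneg1: "v (-1) = 0"
  using vmult[of "-1" "-1"] v1 by simp

lemma vneg: "v (- x) = v x"
proof (cases "x = 0")
  case False
  then show ?thesis using vmult[of "-1" x] vneg1 by simp
qed simp

lemma vinv: "x \<noteq> 0 \<Longrightarrow> v (inverse x) = - v x"
  using vmult[of x "inverse x"] v1 by simp

lemma vdiv: "x \<noteq> 0 \<Longrightarrow> y \<noteq> 0 \<Longrightarrow> v (x / y) = v x - v y"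
  using vmult[of x "inverse y"] vinv[of y] by (simp add: divide_inverse)

lemma vpow: "x \<noteq> 0 \<Longrightarrow> v (x ^ k) = int k * v x"
  by (induction k) (auto simp: v1 vmult algebra_simps)

lemma vpowi: "x \<noteq> 0 \<Longrightarrow> v (x powi k) = k * v x"
proof (cases "k \<ge> 0")
  case True
  assume x: "x \<noteq> 0"
  then show ?thesis using True vpow[OF x, of "nat k"] by (simp add: power_int_def)
next
  case False
  assume x: "x \<noteq> 0"
  then show ?thesis using False vpow[OF x, of "nat (-k)"] vinv[of "x ^ nat (-k)"]
    by (simp add: power_int_def power_inverse)
qed

lemma PF_iff: "x \<in> PF v m \<longleftrightarrow> x = 0 \<or> m \<le> v x"
  by (simp add: PF_def)

lemma PF_0[simp]: "0 \<in> PF v m" by (simp add: PF_iff)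

lemma PF_mono: "m \<le> k \<Longrightarrow> x \<in> PF v k \<Longrightarrow> x \<in> PF v m"
  by (auto simp: PF_iff)

lemma PF_add: "x \<in> PF v m \<Longrightarrow> y \<in> PF v m \<Longrightarrow> x + y \<in> PF v m"
proof -
  assume a: "x \<in> PF v m" "y \<in> PF v m"
  show ?thesis
  proof (cases "x = 0 \<or> y = 0 \<or> x + y = 0")
    case True then show ?thesis using a by auto
  next
    case False then show ?thesis using a vadd[of x y] by (auto simp: PF_iff)
  qed
qed

lemma PF_neg: "x \<in> PF v m \<Longrightarrow> - x \<in> PF v m"
  by (auto simp: PF_iff vneg)

lemma PF_neg_iff: "- x \<in> PF v m \<longleftrightarrow> x \<in> PF v m"
  by (auto simp: PF_iff vneg)

lemma PF_diff: "x \<in> PF v m \<Longrightarrow> y \<in> PF v m \<Longrightarrow> x - y \<in> PF v m"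
  using PF_add[of x m "- y"] PF_neg[of y m] by simp

lemma PF_mult: "x \<in> PF v m \<Longrightarrow> y \<in> PF v k \<Longrightarrow> x * y \<in> PF v (m + k)"
proof -
  assume a: "x \<in> PF v m" "y \<in> PF v k"
  show ?thesis
  proof (cases "x = 0 \<or> y = 0")
    case True then show ?thesis by auto
  next
    case False then show ?thesis using a by (auto simp: PF_iff vmult)
  qed
qed

lemma PF_1_0: "1 \<in> PF v 0" by (simp add: PF_iff v1)

lemma one_notin_PF1: "1 \<notin> PF v 1" by (simp add: PF_iff v1)

lemma two_PF0: "2 \<in> PF v 0"
  using PF_add[OF PF_1_0 PF_1_0] by simp

lemma strict_ultra:
  assumes "x \<noteq> 0" "y = 0 \<or> v x < v y"
  shows "x + y \<noteq> 0 \<and> v (x + y) = v x"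
proof (cases "y = 0")
  case True then show ?thesis using assms by simp
next
  case False
  with assms have lt: "v x < v y" by simp
  have ne: "x + y \<noteq> 0"
  proof
    assume "x + y = 0"
    then have "y = - x" by (simp add: add_eq_0_iff2)
    then show False using lt vneg by simp
  qed
  have ge: "v x \<le> v (x + y)" using vadd[OF assms(1) False ne] lt by simp
  have "min (v (x + y)) (v (- y)) \<le> v (x + y + - y)"
    using vadd[of "x + y" "- y"] ne False assms(1) by simp
  then have "v (x + y) \<le> v x" using lt vneg[of y] by auto
  then show ?thesis using ge ne by simp
qed

lemma PF_close:
  assumes "\<alpha> \<noteq> 0" "v \<alpha> < m" "\<alpha> - \<beta> \<in> PF v m"
  shows "\<beta> \<noteq> 0 \<and> v \<beta> = v \<alpha>"
proof -
  have "\<beta> = \<alpha> + (- (\<alpha> - \<beta>))" by simp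
  moreover have "- (\<alpha> - \<beta>) = 0 \<or> v \<alpha> < v (- (\<alpha> - \<beta>))"
  proof -
    have "- (\<alpha> - \<beta>) \<in> PF v m" using PF_neg[OF assms(3)] .
    then show ?thesis using assms(2) unfolding PF_iff by auto
  qed
  ultimately show ?thesis using strict_ultra[OF assms(1)] by metis
qed

lemma v2_nonneg: "0 \<le> v 2"
  using two_PF0 two_nz by (simp add: PF_iff)

definition cls :: "'f \<Rightarrow> 'f set" where
  "cls x = {y \<in> OF v. x - y \<in> PF v 1}"

lemma cls_shift: "x \<in> OF v \<Longrightarrow> (\<lambda>y. y + 1) ` cls x = cls (x + 1)"
proof (intro set_eqI iffI)
  fix z assume "z \<in> (\<lambda>y. y + 1) ` cls x"
  then obtain y where y: "y \<in> cls x" "z = y + 1" by blast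
  then show "z \<in> cls (x + 1)" using PF_add[OF _ PF_1_0, of y]
    by (auto simp: cls_def OF_def)
next
  fix z assume z: "z \<in> cls (x + 1)"
  have "z - 1 \<in> cls x" using z PF_diff[OF _ PF_1_0, of z]
    by (auto simp: cls_def OF_def algebra_simps)
  then show "z \<in> (\<lambda>y. y + 1) ` cls x" by (metis diff_add_cancel imageI)
qed

lemma v2_zero: "v 2 = 0"
proof (rule ccontr)
  assume "v 2 \<noteq> 0"
  then have two: "2 \<in> PF v 1" using v2_nonneg by (simp add: PF_iff)
  have fin: "finite (residue_classes v)" using q_props by (metis card.infinite not_less_zero)
  define f where "f = (\<lambda>C::'f set. (\<lambda>y. y + 1) ` C)"
  have RC: "C \<in> residue_classes v \<longleftrightarrow> (\<exists>x\<in>OF v. C = cls x)" for C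
    by (auto simp: residue_classes_def cls_def)
  have OF1: "x \<in> OF v \<Longrightarrow> x + 1 \<in> OF v" for x
    using PF_add[OF _ PF_1_0] by (simp add: OF_def)
  have "even (card (residue_classes v))"
  proof (rule even_card_involution[OF fin])
    show "\<forall>C\<in>residue_classes v. f C \<in> residue_classes v"
      using RC cls_shift OF1 f_def by metis
    show "\<forall>C\<in>residue_classes v. f (f C) = C"
    proof
      fix C assume "C \<in> residue_classes v"
      then obtain x where x: "x \<in> OF v" "C = cls x" using RC by blast
      have "f (f C) = cls (x + 1 + 1)" using x OF1 cls_shift f_def by metis
      also have "\<dots> = cls x"
      proof -
        have "(x + 1 + 1 - y \<in> PF v 1) = (x - y \<in> PF v 1)" for y
        proof -
          have "x + 1 + 1 - y = (x - y) + 2" by simp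
          then show ?thesis using PF_add[OF _ two, of "x - y"] PF_diff[OF _ two, of "x + 1 + 1 - y"]
            by (auto simp: algebra_simps)
        qed
        then show ?thesis by (simp add: cls_def)
      qed
      finally show "f (f C) = C" using x by simp
    qed
    show "\<forall>C\<in>residue_classes v. f C \<noteq> C"
    proof
      fix C assume "C \<in> residue_classes v"
      then obtain x where x: "x \<in> OF v" "C = cls x" using RC by blast
      have "x \<in> cls x" using x by (simp add: cls_def)
      moreover have "x \<notin> cls (x + 1)" using one_notin_PF1 by (simp add: cls_def)
      ultimately show "f C \<noteq> C" using x cls_shift f_def by metis
    qed
  qed
  then show False using q_props by simp
qed

end

definition ladd :: "'f::field \<times> 'f \<Rightarrow> 'f \<times> 'f \<Rightarrow> 'f \<times> 'f" where
  "ladd x y = (fst x + fst y, snd x + snd y)"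

lemma lnorm_lmul: "lnorm e (lmul e x y) = lnorm e x * lnorm e y"
  by (simp add: lnorm_def lmul_def algebra_simps)

lemma lmul_comm: "lmul e x y = lmul e y x"
  by (simp add: lmul_def algebra_simps)

lemma lmul_assoc: "lmul e (lmul e x y) z = lmul e x (lmul e y z)"
  by (simp add: lmul_def algebra_simps)

lemma lmul_conj_self: "lmul e x (lconj x) = (lnorm e x, 0)"
  by (simp add: lmul_def lconj_def lnorm_def algebra_simps)

lemma lnorm_lconj: "lnorm e (lconj x) = lnorm e x"
  by (simp add: lnorm_def lconj_def)

lemma lnorm_lscal: "lnorm e (lscal c x) = c * c * lnorm e x"
  by (simp add: lnorm_def lscal_def algebra_simps)

lemma lmul_one: "lmul e x (1, 0) = x"
  by (simp add: lmul_def)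

lemma lmul_lscal: "lmul e x (lscal c y) = lscal c (lmul e x y)"
  by (simp add: lmul_def lscal_def algebra_simps)

lemma lmul_lsub: "lmul e x (lsub y z) = lsub (lmul e x y) (lmul e x z)"
  by (simp add: lmul_def lsub_def algebra_simps)

lemma lmul_ladd: "lmul e (ladd x y) z = ladd (lmul e x z) (lmul e y z)"
  by (simp add: lmul_def ladd_def algebra_simps)

lemma lconj_lconj: "lconj (lconj x) = x" by (simp add: lconj_def)

locale ufield = pfield v q for v :: "'f::field \<Rightarrow> int" and q +
  fixes e :: 'f
  assumes up: "unram_param v e"
begin

lemma e_nz: "e \<noteq> 0" and ve: "v e = 0" and nonsq: "\<And>y. y \<in> OF v \<Longrightarrow> y * y - e \<notin> PF v 1"
  using up unfolding unram_param_def by blast+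

definition vL :: "'f \<times> 'f \<Rightarrow> int" where
  "vL x = (if fst x = 0 then v (snd x) else if snd x = 0 then v (fst x) else min (v (fst x)) (v (snd x)))"

lemma PL_iff: "x \<in> PL v m \<longleftrightarrow> x = (0, 0) \<or> m \<le> vL x"
  by (cases x) (auto simp: PL_def vL_def PF_iff)

lemma PL_0[simp]: "(0, 0) \<in> PL v m" by (simp add: PL_def)

lemma PL_mono: "m \<le> k \<Longrightarrow> x \<in> PL v k \<Longrightarrow> x \<in> PL v m"
  by (auto simp: PL_def intro: PF_mono)

lemma e_PF0: "e \<in> PF v 0" using ve by (simp add: PF_iff)

lemma PL_mult: "x \<in> PL v m \<Longrightarrow> y \<in> PL v k \<Longrightarrow> lmul e x y \<in> PL v (m + k)"
proof -
  assume a: "x \<in> PL v m" "y \<in> PL v k"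
  have f: "fst x \<in> PF v m" "snd x \<in> PF v m" "fst y \<in> PF v k" "snd y \<in> PF v k"
    using a by (auto simp: PL_def mem_Times_iff)
  have "e * snd x \<in> PF v (0 + m)" by (rule PF_mult[OF e_PF0 f(2)])
  then have "e * snd x * snd y \<in> PF v (m + k)" using PF_mult[OF _ f(4)] by simp
  moreover have "fst x * fst y \<in> PF v (m + k)" by (rule PF_mult[OF f(1,3)])
  moreover have "fst x * snd y \<in> PF v (m + k)" by (rule PF_mult[OF f(1,4)])
  moreover have "snd x * fst y \<in> PF v (m + k)" by (rule PF_mult[OF f(2,3)])
  ultimately show ?thesis by (simp add: lmul_def PL_def PF_add)
qed

lemma PL_lscal: "c \<in> PF v m \<Longrightarrow> x \<in> PL v k \<Longrightarrow> lscal c x \<in> PL v (m + k)"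
  by (auto simp: lscal_def PL_def mem_Times_iff intro!: PF_mult)

lemma PL_lsub: "x \<in> PL v m \<Longrightarrow> y \<in> PL v m \<Longrightarrow> lsub x y \<in> PL v m"
  by (auto simp: lsub_def PL_def mem_Times_iff intro!: PF_diff)

lemma PL_ladd: "x \<in> PL v m \<Longrightarrow> y \<in> PL v m \<Longrightarrow> ladd x y \<in> PL v m"
  by (auto simp: ladd_def PL_def mem_Times_iff intro!: PF_add)

lemma PL_lneg: "x \<in> PL v m \<Longrightarrow> lneg x \<in> PL v m"
  by (auto simp: lneg_def PL_def mem_Times_iff intro!: PF_neg)

lemma PL_lconj: "x \<in> PL v m \<Longrightarrow> lconj x \<in> PL v m"
  by (auto simp: lconj_def PL_def mem_Times_iff intro!: PF_neg)

lemma vnorm: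
  assumes "x \<noteq> (0, 0)"
  shows "lnorm e x \<noteq> 0 \<and> v (lnorm e x) = 2 * vL x"
proof -
  obtain a b where x: "x = (a, b)" by (cases x)
  have N: "lnorm e x = a * a + (- (e * b * b))" by (simp add: x lnorm_def)
  show ?thesis
  proof (cases "b = 0")
    case True
    then have "a \<noteq> 0" using assms x by simp
    then show ?thesis using True by (simp add: x lnorm_def vL_def vmult)
  next
    case b: False
    have vb: "v (- (e * b * b)) = 2 * v b" "- (e * b * b) \<noteq> 0"
      using b e_nz by (simp_all add: vneg vmult ve)
    show ?thesis
    proof (cases "a = 0")
      case True
      then show ?thesis using vb by (simp add: x lnorm_def vL_def)
    next
      case a: False
      have va: "v (a * a) = 2 * v a" "a * a \<noteq> 0" using a by (simp_all add: vmult)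
      consider "v a < v b" | "v b < v a" | "v a = v b" by linarith
      then show ?thesis
      proof cases
        case 1
        then show ?thesis using strict_ultra[of "a * a" "- (e * b * b)"] va vb a b
          by (simp add: N vL_def x lnorm_def)
      next
        case 2
        then show ?thesis using strict_ultra[of "- (e * b * b)" "a * a"] va vb a b
          by (simp add: N vL_def x add.commute lnorm_def)
      next
        case 3
        define r where "r = a / b"
        have vr: "v r = 0" using 3 a b by (simp add: r_def vdiv)
        have rO: "r \<in> OF v" using vr by (simp add: OF_def PF_iff)
        have ns: "r * r - e \<notin> PF v 1" using nonsq[OF rO] .
        then have rne: "r * r - e \<noteq> 0" by auto
        have rr: "r * r \<noteq> 0" using vr by (auto simp: r_def a b)
        have "min (v (r * r)) (v (- e)) \<le> v (r * r + - e)"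
          using vadd[of "r * r" "- e"] rr e_nz rne by simp
        then have "0 \<le> v (r * r - e)" using vr vmult[of r r] rr by (simp add: vneg ve)
        then have vre: "v (r * r - e) = 0" using ns rne by (simp add: PF_iff)
        have "lnorm e x = (b * b) * (r * r - e)" using b by (simp add: x lnorm_def r_def field_simps)
        then show ?thesis using vre rne b 3 a by (simp add: vmult vL_def x)
      qed
    qed
  qed
qed

lemma lnorm_zero_iff: "lnorm e x = 0 \<longleftrightarrow> x = (0, 0)"
  using vnorm[of x] by (auto simp: lnorm_def)

lemma norm_PF_iff:
  assumes "x \<noteq> (0,0)" shows "lnorm e x \<in> PF v m \<longleftrightarrow> m \<le> 2 * vL x"
  using vnorm[OF assms] by (simp add: PF_iff)

lemma unit_norm:
  assumes "z \<in> PL v 0" "z \<notin> PL v 1"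
  shows "lnorm e z \<noteq> 0 \<and> v (lnorm e z) = 0"
proof -
  have z: "z \<noteq> (0,0)" using assms(2) by auto
  have "vL z = 0" using assms z by (simp add: PL_iff)
  then show ?thesis using vnorm[OF z] by simp
qed

end

fun Eset :: "'f::field set \<Rightarrow> 'f \<Rightarrow> nat \<Rightarrow> 'f set" where
  "Eset D w 0 = {0}"
| "Eset D w (Suc k) = (\<lambda>(d, t). d + w * t) ` (D \<times> Eset D w k)"

lemma Eset_finite: "finite D \<Longrightarrow> finite (Eset D w k)"
  by (induction k) auto

lemma Eset_card: "finite D \<Longrightarrow> card (Eset D w k) \<le> card D ^ k"
proof (induction k)
  case (Suc k)
  have "card (Eset D w (Suc k)) \<le> card (D \<times> Eset D w k)"
    by (simp only: Eset.simps) (rule card_image_le, simp add: Eset_finite Suc.prems)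
  also have "\<dots> = card D * card (Eset D w k)" by (rule card_cartesian_product)
  also have "\<dots> \<le> card D * card D ^ k" using Suc by simp
  finally show ?case by simp
qed simp

context ufield
begin

lemma hilbert90:
  assumes w0: "w \<in> PL v 0" and w1: "w \<notin> PL v 1" and m: "1 - lnorm e w \<in> PF v m"
  shows "\<exists>y. lnorm e y = 1 \<and> lsub y w \<in> PL v m"
proof -
  have "\<exists>\<alpha>. \<alpha> \<in> PL v 0 \<and> ladd \<alpha> (lmul e w (lconj \<alpha>)) \<notin> PL v 1"
  proof (rule ccontr)
    assume "\<not> ?thesis"
    then have h1: "ladd (1,0) (lmul e w (lconj (1,0))) \<in> PL v 1"
      and h2: "ladd (0,1) (lmul e w (lconj (0,1))) \<in> PL v 1"
      using PF_1_0 by (auto simp: PL_def)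
    have "1 + fst w \<in> PF v 1" using h1 by (simp add: ladd_def lmul_def lconj_def PL_def mem_Times_iff)
    moreover have "1 - fst w \<in> PF v 1" using h2 by (simp add: ladd_def lmul_def lconj_def PL_def mem_Times_iff)
    ultimately have "(1 + fst w) + (1 - fst w) \<in> PF v 1" by (rule PF_add)
    then have "2 \<in> PF v 1" by simp
    then show False using v2_zero two_nz by (simp add: PF_iff)
  qed
  then obtain \<alpha> where a0: "\<alpha> \<in> PL v 0" and z1: "ladd \<alpha> (lmul e w (lconj \<alpha>)) \<notin> PL v 1" by blast
  define z where "z = ladd \<alpha> (lmul e w (lconj \<alpha>))"
  have z0: "z \<in> PL v 0" unfolding z_def
    using PL_ladd[OF a0, of "lmul e w (lconj \<alpha>)"] PL_mult[OF w0 PL_lconj[OF a0]] by simp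
  have Nz: "lnorm e z \<noteq> 0" "v (lnorm e z) = 0" using unit_norm[OF z0] z1 z_def by auto
  define y where "y = lscal (inverse (lnorm e z)) (lmul e z z)"
  have Ny: "lnorm e y = 1" using Nz by (simp add: y_def lnorm_lscal lnorm_lmul field_simps)
  have eq: "lsub y w = lscal (inverse (lnorm e z)) (lmul e z (lscal (1 - lnorm e w) \<alpha>))"
    using Nz(1) unfolding y_def z_def
    by (simp add: lsub_def lscal_def lmul_def ladd_def lconj_def lnorm_def prod_eq_iff field_simps)
      (simp add: algebra_simps)?
  have iv: "inverse (lnorm e z) \<in> PF v 0" using Nz by (simp add: PF_iff vinv)
  have "lmul e z (lscal (1 - lnorm e w) \<alpha>) \<in> PL v (0 + (m + 0))"
    by (rule PL_mult[OF z0 PL_lscal[OF m a0]])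
  then have "lsub y w \<in> PL v (0 + (0 + (m + 0)))" unfolding eq by (rule PL_lscal[OF iv])
  then show ?thesis using Ny by (intro exI[of _ y]) simp
qed

end

context ufield
begin

definition piu :: 'f where "piu = (SOME w. w \<noteq> 0 \<and> v w = 1)"

lemma piu: "piu \<noteq> 0" "v piu = 1"
  using someI_ex[OF unif] by (auto simp: piu_def)

lemma vpiu_powi: "v (piu powi k) = k" "piu powi k \<noteq> 0"
  using vpowi[OF piu(1)] piu by auto

definition Dg :: "'f set" where "Dg = (\<lambda>C. SOME y. y \<in> C) ` residue_classes v"

lemma RC_fin: "finite (residue_classes v)"
  using q_props by (metis card.infinite not_less_zero)

lemma Dg_fin: "finite Dg" using RC_fin by (simp add: Dg_def)

lemma Dg_card: "card Dg \<le> q"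
  using card_image_le[OF RC_fin] q_props by (simp add: Dg_def)

lemma Dg_cover: "z0 \<in> OF v \<Longrightarrow> \<exists>d\<in>Dg. d \<in> OF v \<and> z0 - d \<in> PF v 1"
proof -
  assume z0: "z0 \<in> OF v"
  let ?C = "{y \<in> OF v. z0 - y \<in> PF v 1}"
  have C: "?C \<in> residue_classes v" using z0 by (auto simp: residue_classes_def)
  have "z0 \<in> ?C" using z0 by simp
  then have "(SOME y. y \<in> ?C) \<in> ?C" by (rule someI)
  then show ?thesis using C unfolding Dg_def by blast
qed

lemma Dg_OF: "Dg \<subseteq> OF v"
proof
  fix d assume "d \<in> Dg"
  then obtain C where C: "C \<in> residue_classes v" "d = (SOME y. y \<in> C)" by (auto simp: Dg_def)
  then obtain z0 where z0: "z0 \<in> OF v" "C = {y \<in> OF v. z0 - y \<in> PF v 1}" by (auto simp: residue_classes_def)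
  have "z0 \<in> C" using z0 by simp
  then have "d \<in> C" using C by (metis someI)
  then show "d \<in> OF v" using z0 by simp
qed

abbreviation "EE k \<equiv> Eset Dg piu k"

lemma EE_OF: "EE k \<subseteq> OF v"
proof (induction k)
  case 0 then show ?case by (simp add: OF_def)
next
  case (Suc k)
  have "d + piu * t \<in> OF v" if "d \<in> Dg" "t \<in> EE k" for d t
  proof -
    have "piu * t \<in> PF v (1 + 0)"
      using PF_mult[of piu 1 t 0] piu Suc that by (auto simp: PF_iff OF_def)
    then have "piu * t \<in> PF v 0" by (rule PF_mono[rotated]) simp
    then show ?thesis using PF_add Dg_OF that by (auto simp: OF_def)
  qed
  then show ?case by auto
qed

lemma EE_cover: "z0 \<in> OF v \<Longrightarrow> \<exists>t\<in>EE k. z0 - t \<in> PF v (int k)"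
proof (induction k arbitrary: z0)
  case 0 then show ?case by (simp add: OF_def)
next
  case (Suc k)
  obtain d where d: "d \<in> Dg" "d \<in> OF v" "z0 - d \<in> PF v 1" using Dg_cover[OF Suc.prems] by blast
  define zz where "zz = (z0 - d) / piu"
  have zz: "zz \<in> OF v"
  proof (cases "z0 - d = 0")
    case False
    then have "v zz = v (z0 - d) - 1" using piu by (simp add: zz_def vdiv)
    then show ?thesis using d False by (simp add: OF_def PF_iff)
  qed (simp add: zz_def OF_def)
  obtain t where t: "t \<in> EE k" "zz - t \<in> PF v (int k)" using Suc.IH[OF zz] by blast
  have "z0 - (d + piu * t) = piu * (zz - t)" using piu by (simp add: zz_def field_simps)
  moreover have "piu * (zz - t) \<in> PF v (1 + int k)" using PF_mult[OF _ t(2), of piu 1] piu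
    by (simp add: PF_iff)
  moreover have "d + piu * t \<in> EE (Suc k)" using d t by auto
  ultimately show ?case by (metis add.commute of_nat_Suc)
qed

lemma EE_card: "finite (EE k)" "card (EE k) \<le> q ^ k"
  using Eset_finite[OF Dg_fin] Eset_card[OF Dg_fin, of piu k] Dg_card
  by (auto intro: order_trans power_mono)

end

context ufield
begin

lemma orbit_cover:
  fixes s :: int and a :: nat
  shows "\<exists>R. finite R \<and> card R \<le> q ^ a \<and> R \<subseteq> PL v s \<and>
     (\<forall>x\<in>PL v s. \<exists>r\<in>R. \<exists>y. lnorm e y = 1 \<and> lsub x (lmul e r y) \<in> PL v (s + int a))"
proof -
  define g where "g = (\<lambda>x. if x \<in> PL v (s + int a) then 0 else lnorm e x * piu powi (-(s + vL x)))"
  have gnt: "g x \<noteq> 0 \<and> v (g x) = vL x - s \<and> v (g x) < int a \<and> 0 \<le> v (g x)"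
    if "x \<in> PL v s" "x \<notin> PL v (s + int a)" for x
  proof -
    have x0: "x \<noteq> (0,0)" using that by auto
    have k: "s \<le> vL x" "vL x < s + int a" using that x0 by (auto simp: PL_iff)
    have gx: "g x = lnorm e x * piu powi (-(s + vL x))" using that by (simp add: g_def)
    show ?thesis using vnorm[OF x0] vpiu_powi[of "-(s + vL x)"] k by (simp add: gx vmult)
  qed
  have gOF: "g x \<in> OF v" if "x \<in> PL v s" for x
    using gnt[OF that] by (cases "x \<in> PL v (s + int a)") (auto simp: g_def OF_def PF_iff)
  define f where "f = (\<lambda>x. SOME t. t \<in> EE a \<and> g x - t \<in> PF v (int a))"
  have f: "f x \<in> EE a \<and> g x - f x \<in> PF v (int a)" if "x \<in> PL v s" for x
    using EE_cover[OF gOF[OF that], of a] unfolding f_def by (rule someI2_bex) auto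
  define rep where "rep = (\<lambda>t. SOME x. x \<in> PL v s \<and> f x = t)"
  define R where "R = rep ` f ` PL v s"
  have rep: "rep (f x) \<in> PL v s \<and> f (rep (f x)) = f x" if "x \<in> PL v s" for x
    unfolding rep_def by (rule someI[of _ x]) (use that in auto)
  have fin: "finite (f ` PL v s)" using EE_card(1) f by (meson finite_subset image_subsetI)
  have "card R \<le> card (f ` PL v s)" unfolding R_def by (rule card_image_le[OF fin])
  also have "\<dots> \<le> card (EE a)" using f by (intro card_mono[OF EE_card(1)]) auto
  also have "\<dots> \<le> q ^ a" by (rule EE_card(2))
  finally have cR: "card R \<le> q ^ a" .
  have cov: "\<exists>y. lnorm e y = 1 \<and> lsub x (lmul e r y) \<in> PL v (s + int a)"
    if x: "x \<in> PL v s" and r: "r \<in> PL v s" and fr: "f r = f x" for x r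
  proof -
    have d: "g x - g r \<in> PF v (int a)"
      using PF_diff[OF conjunct2[OF f[OF x]] conjunct2[OF f[OF r]]] fr by simp
    consider "x \<in> PL v (s + int a)" "r \<in> PL v (s + int a)"
      | "x \<in> PL v (s + int a)" "r \<notin> PL v (s + int a)"
      | "x \<notin> PL v (s + int a)" "r \<in> PL v (s + int a)"
      | "x \<notin> PL v (s + int a)" "r \<notin> PL v (s + int a)" by blast
    then show ?thesis
    proof cases
      case 1
      then show ?thesis using PL_lsub[OF 1] by (intro exI[of _ "(1,0)"]) (simp add: lmul_one lnorm_def)
    next
      case 2
      then have "- g r \<in> PF v (int a)" using d by (simp add: g_def)
      then have "g r \<in> PF v (int a)" by (simp add: PF_neg_iff)
      then show ?thesis using gnt[OF r 2(2)] by (simp add: PF_iff)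
    next
      case 3
      then have "g x \<in> PF v (int a)" using d by (simp add: g_def)
      then show ?thesis using gnt[OF x 3(1)] by (simp add: PF_iff)
    next
      case 4
      have gx: "g x \<noteq> 0" "v (g x) = vL x - s" "v (g x) < int a" using gnt[OF x 4(1)] by auto
      have gr: "v (g r) = vL r - s" using gnt[OF r 4(2)] by auto
      have "v (g r) = v (g x)" using PF_close[OF gx(1) gx(3) d] by simp
      then have kk: "vL r = vL x" using gx gr by simp
      define k where "k = vL x"
      have x0: "x \<noteq> (0,0)" and r0: "r \<noteq> (0,0)" using 4 by auto
      have pp: "piu powi (- (s + k)) * piu powi (s + k) = 1"
        using vpiu_powi(2)[of "s + k"] by (simp only: power_int_minus) (simp del: power_int_minus)
      have "g x = lnorm e x * piu powi (- (s + k))" using 4 by (simp add: g_def k_def)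
      then have Nx: "lnorm e x = g x * piu powi (s + k)"
        by (simp only: mult.assoc pp mult_1_right)
      have "g r = lnorm e r * piu powi (- (s + k))" using 4 kk by (simp add: g_def k_def)
      then have Nr: "lnorm e r = g r * piu powi (s + k)"
        by (simp only: mult.assoc pp mult_1_right)
      have Nxr: "lnorm e x - lnorm e r \<in> PF v (s + k + int a)"
      proof -
        have "lnorm e x - lnorm e r = piu powi (s + k) * (g x - g r)" by (simp add: Nx Nr algebra_simps)
        moreover have "piu powi (s + k) \<in> PF v (s + k)" using vpiu_powi by (simp add: PF_iff)
        ultimately show ?thesis using PF_mult[OF _ d] by simp
      qed
      have vNx: "lnorm e x \<noteq> 0" "v (lnorm e x) = 2 * k" using vnorm[OF x0] k_def by auto
      have vNr: "lnorm e r \<noteq> 0" "v (lnorm e r) = 2 * k" using vnorm[OF r0] kk k_def by auto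
      define w where "w = lscal (inverse (lnorm e r)) (lmul e x (lconj r))"
      have Nw: "lnorm e w = lnorm e x / lnorm e r"
        using vNr by (simp add: w_def lnorm_lscal lnorm_lmul lnorm_lconj field_simps)
      have w0: "w \<noteq> (0,0)" using Nw vNx vNr lnorm_zero_iff[of w] by auto
      have "v (lnorm e w) = 0" using Nw vNx vNr by (simp add: vdiv)
      then have vLw: "vL w = 0" using vnorm[OF w0] by simp
      have wP0: "w \<in> PL v 0" and wP1: "w \<notin> PL v 1" using vLw w0 by (auto simp: PL_iff)
      have "1 - lnorm e w = (lnorm e r - lnorm e x) * inverse (lnorm e r)"
        using vNr by (simp add: Nw field_simps)
      moreover have "lnorm e r - lnorm e x \<in> PF v (s + k + int a)"
        using PF_neg[OF Nxr] by simp
      moreover have "inverse (lnorm e r) \<in> PF v (- 2 * k)" using vNr by (simp add: PF_iff vinv)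
      ultimately have "1 - lnorm e w \<in> PF v (s + k + int a + - 2 * k)"
        using PF_mult by metis
      then obtain y where y: "lnorm e y = 1" "lsub y w \<in> PL v (s + k + int a + - 2 * k)"
        using hilbert90[OF wP0 wP1] by blast
      have "lmul e r w = lscal (inverse (lnorm e r)) (lmul e x (lmul e r (lconj r)))"
        by (simp add: w_def lmul_def lscal_def lconj_def algebra_simps)
      also have "\<dots> = lscal (inverse (lnorm e r)) (lscal (lnorm e r) x)"
        by (simp only: lmul_conj_self) (simp add: lmul_def lscal_def algebra_simps)
      also have "\<dots> = x" using vNr by (simp add: lscal_def mult.assoc[symmetric])
      finally have rw: "lmul e r w = x" .
      have "lsub x (lmul e r y) = lmul e r (lneg (lsub y w))"
        by (subst rw[symmetric]) (simp add: lmul_def lsub_def lneg_def algebra_simps)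
      moreover have "r \<in> PL v k" using r0 kk k_def by (simp add: PL_iff)
      ultimately have "lsub x (lmul e r y) \<in> PL v (k + (s + k + int a + - 2 * k))"
        using PL_mult[OF _ PL_lneg[OF y(2)]] by metis
      then show ?thesis using y(1) by (intro exI[of _ y]) simp
    qed
  qed
  show ?thesis
  proof (intro exI[of _ R] conjI)
    show "finite R" using fin by (simp add: R_def)
    show "card R \<le> q ^ a" by (rule cR)
    show "R \<subseteq> PL v s" using rep by (auto simp: R_def)
    show "\<forall>x\<in>PL v s. \<exists>r\<in>R. \<exists>y. lnorm e y = 1 \<and> lsub x (lmul e r y) \<in> PL v (s + int a)"
    proof
      fix x assume x: "x \<in> PL v s"
      have "rep (f x) \<in> R" using x by (simp add: R_def)
      then show "\<exists>r\<in>R. \<exists>y. lnorm e y = 1 \<and> lsub x (lmul e r y) \<in> PL v (s + int a)"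
        using cov[OF x conjunct1[OF rep[OF x]] conjunct2[OF rep[OF x]]] by blast
    qed
  qed
qed

end

theorem lemma8p3:
  fixes v :: "'f::field \<Rightarrow> int" and q :: nat and e :: 'f
    and tau :: "'f \<Rightarrow> complex" and c :: int
    and chi :: "'f \<times> 'f \<Rightarrow> complex" and lam :: real
    and rho :: "'f mat2 \<Rightarrow> ('f \<times> 'f \<Rightarrow> complex) \<Rightarrow> ('f \<times> 'f \<Rightarrow> complex)"
    and n :: nat
  assumes "padic_field v q"
    and "unram_param v e"
    and "additive_char_conductor v tau c"
    and "char_L v e chi"
    and "\<not> factors_through_norm e chi"
    and "selfdual_measure v q e tau lam"
    and "weil_rep v q e tau chi lam rho"
    and "1 \<le> n"
  shows "\<forall>B. finite B \<longrightarrow> B \<subseteq> fixed_vectors v e chi rho n \<longrightarrow> lin_indep_fun B \<longrightarrow>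
           card B \<le> q ^ (if even (c - int n) then n else n - 1)"
proof (intro allI impI)
  fix B assume fB: "finite B" and BF: "B \<subseteq> fixed_vectors v e chi rho n" and li: "lin_indep_fun B"
  interpret ufield v q e using assms(1,2) by unfold_locales
  define S where "S = schwartz_chi v e chi"
  note WW = assms(7)[unfolded weil_rep_def Let_def, folded S_def]
  have W1: "\<forall>g \<in> Gplus e. \<forall>Phi \<in> S. rho g Phi \<in> S" using WW by (rule conjunct1)
  have W2: "\<forall>g \<in> Gplus e. \<forall>h \<in> Gplus e. \<forall>Phi \<in> S. rho (mmul g h) Phi = rho g (rho h Phi)"
    using WW by (elim conjE)
  have W3: "\<forall>u. \<forall>Phi \<in> S. rho (1, u, 0, 1) Phi = (\<lambda>x. tau (u * lnorm e x) * Phi x)"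
    using WW by (elim conjE)
  have W4: "\<exists>gamma. cmod gamma = 1 \<and>
          (\<forall>Phi \<in> S. rho (0, 1, -1, 0) Phi = (\<lambda>x. gamma * fourier v q e tau lam Phi (lconj x)))"
    using WW by (elim conjE)
  obtain gamma where gam: "cmod gamma = 1"
    and weyl: "\<forall>Phi \<in> S. rho (0, 1, -1, 0) Phi = (\<lambda>x. gamma * fourier v q e tau lam Phi (lconj x))"
    using W4 by blast
  have sd: "\<And>Phi x. schwartz v Phi \<Longrightarrow> fourier v q e tau lam (fourier v q e tau lam Phi) x = Phi (lneg x)"
    using assms(6) unfolding selfdual_measure_def by blast
  have tau_add: "\<And>x y. tau (x + y) = tau x * tau y" and tau_nz: "\<And>x. tau x \<noteq> 0"
    and cond: "\<And>m. (\<forall>x \<in> PF v m. tau x = 1) \<longleftrightarrow> c \<le> m"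
    using assms(3) unfolding additive_char_conductor_def by blast+
  have tau0: "tau 0 = 1" using tau_add[of 0 0] tau_nz[of 0] by simp
  define a :: nat where "a = (if even (c - int n) then n else n - 1)"
  define s :: int where "s = (c - int a) div 2"
  have ev: "even (c - int a)" using assms(8)
    by (cases "even (c - int n)") (auto simp: a_def of_nat_diff)
  then have s2: "2 * s = c - int a" by (simp add: s_def)
  have an: "int n - 1 \<le> int a" using assms(8) by (simp add: a_def of_nat_diff)
  have Gp: "\<And>g. det2 g = 1 \<Longrightarrow> g \<in> Gplus e"
    unfolding Gplus_def by (rule CollectI, rule exI[of _ "(1,0)"]) (simp add: lnorm_def)
  have supp: "x \<in> PL v s"
    if Psi: "Psi \<in> S" and fx: "\<forall>u\<in>PF v (int n). rho (1, u, 0, 1) Psi = Psi" and nz: "Psi x \<noteq> 0"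
    for Psi x
  proof (cases "x = (0,0)")
    case False
    have Nx: "lnorm e x \<noteq> 0" "v (lnorm e x) = 2 * vL x" using vnorm[OF False] by auto
    have "\<forall>z\<in>PF v (int n + 2 * vL x). tau z = 1"
    proof
      fix z assume z: "z \<in> PF v (int n + 2 * vL x)"
      show "tau z = 1"
      proof (cases "z = 0")
        case True then show ?thesis using tau0 by simp
      next
        case zn: False
        define u where "u = z / lnorm e x"
        have "v u = v z - 2 * vL x" using zn Nx by (simp add: u_def vdiv)
        then have u: "u \<in> PF v (int n)" using z zn by (simp add: PF_iff)
        have "rho (1, u, 0, 1) Psi x = Psi x" using fx u by simp
        then have "tau (u * lnorm e x) * Psi x = Psi x" using W3 Psi by simp
        moreover have "u * lnorm e x = z" using Nx by (simp add: u_def)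
        ultimately show ?thesis using nz by simp
      qed
    qed
    then have "c \<le> int n + 2 * vL x" using cond by blast
    then have "s \<le> vL x" using s2 an by linarith
    then show ?thesis by (simp add: PL_iff)
  qed simp
  define w :: "'f mat2" where "w = (0, 1, -1, 0)"
  have wG: "w \<in> Gplus e" by (rule Gp) (simp add: w_def)
  have fixA: "Phi \<in> S \<and> (\<forall>g\<in>Kcong v n. rho g Phi = Phi)" if "Phi \<in> B" for Phi
    using that BF by (auto simp: fixed_vectors_def S_def)
  have KU: "(1, u, 0, 1) \<in> Kcong v n" "(1, 0, - u, 1) \<in> Kcong v n" if "u \<in> PF v (int n)" for u
    using that PF_neg[OF that] by (auto simp: Kcong_def)
  have A: "x \<in> PL v s" if "Phi \<in> B" "Phi x \<noteq> 0" for Phi x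
    using supp[of Phi x] fixA[OF that(1)] KU that(2) by blast
  have FT: "y \<in> PL v s" if P: "Phi \<in> B" and nz: "fourier v q e tau lam Phi y \<noteq> 0" for Phi y
  proof -
    have PS: "Phi \<in> S" and Pf: "\<forall>g\<in>Kcong v n. rho g Phi = Phi" using fixA[OF P] by auto
    define Psi where "Psi = rho w Phi"
    have PsiS: "Psi \<in> S" using W1 wG PS by (simp add: Psi_def)
    have "\<forall>u\<in>PF v (int n). rho (1, u, 0, 1) Psi = Psi"
    proof
      fix u assume u: "u \<in> PF v (int n)"
      have G1: "(1, u, 0, 1) \<in> Gplus e" "(1, 0, - u, 1) \<in> Gplus e" by (auto intro!: Gp)
      have "rho (1, u, 0, 1) Psi = rho (mmul (1, u, 0, 1) w) Phi"
        using W2 G1(1) wG PS by (simp add: Psi_def)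
      also have "mmul (1, u, 0, 1) w = mmul w (1, 0, - u, 1)" by (simp add: w_def)
      also have "rho \<dots> Phi = rho w (rho (1, 0, - u, 1) Phi)" using W2 G1(2) wG PS by simp
      also have "\<dots> = Psi" using Pf KU[OF u] by (simp add: Psi_def)
      finally show "rho (1, u, 0, 1) Psi = Psi" .
    qed
    moreover have "Psi (lconj y) \<noteq> 0"
      using weyl PS nz gam by (auto simp: Psi_def w_def lconj_lconj)
    ultimately have "lconj y \<in> PL v s" using supp[OF PsiS] by blast
    then show ?thesis using PL_lconj lconj_lconj by metis
  qed
  have C: "Phi x = Phi x'" if P: "Phi \<in> B" and d: "lsub x x' \<in> PL v (c - s)" for Phi x x'
  proof -
    have PS: "Phi \<in> S" using fixA[OF P] by auto
    then have sw: "schwartz v Phi" by (simp add: S_def schwartz_chi_def)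
    let ?FP = "fourier v q e tau lam Phi"
    have "(\<lambda>y. ?FP y * pairing e tau (lneg x) y) = (\<lambda>y. ?FP y * pairing e tau (lneg x') y)"
    proof
      fix y
      show "?FP y * pairing e tau (lneg x) y = ?FP y * pairing e tau (lneg x') y"
      proof (cases "?FP y = 0")
        case False
        then have y: "y \<in> PL v s" using FT[OF P] by blast
        have d': "lsub x' x \<in> PL v (c - s)" using PL_lneg[OF d] by (simp add: lneg_def lsub_def)
        have "lmul e (lsub x' x) y \<in> PL v (c - s + s)" by (rule PL_mult[OF d' y])
        then have "fst (lmul e (lsub x' x) y) \<in> PF v c" by (simp add: PL_def mem_Times_iff)
        then have "2 * fst (lmul e (lsub x' x) y) \<in> PF v (0 + c)" by (rule PF_mult[OF two_PF0])
        then have t1: "tau (ltr (lmul e (lsub x' x) y)) = 1" using cond[of c] by (simp add: ltr_def)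
        have "ltr (lmul e (lneg x) y) = ltr (lmul e (lneg x') y) + ltr (lmul e (lsub x' x) y)"
          by (simp add: ltr_def lmul_def lneg_def lsub_def algebra_simps)
        then have "pairing e tau (lneg x) y = pairing e tau (lneg x') y"
          using t1 tau_add by (simp add: pairing_def)
        then show ?thesis by simp
      qed simp
    qed
    then have "fourier v q e tau lam ?FP (lneg x) = fourier v q e tau lam ?FP (lneg x')"
      by (simp add: fourier_def)
    then show ?thesis using sd[OF sw] by (simp add: lneg_def)
  qed
  have D: "Phi (lmul e x y) = inverse (chi y) * Phi x" if "Phi \<in> B" "lnorm e y = 1" for Phi x y
  proof -
    have "Phi \<in> schwartz_chi v e chi" using fixA[OF that(1)] by (simp add: S_def)
    then have "\<forall>x y. lnorm e y = 1 \<longrightarrow> Phi (lmul e x y) = inverse (chi y) * Phi x"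
      unfolding schwartz_chi_def by blast
    then show ?thesis using that(2) by blast
  qed
  obtain R where R: "finite R" "card R \<le> q ^ a" "R \<subseteq> PL v s"
    and cov: "\<forall>x\<in>PL v s. \<exists>r\<in>R. \<exists>y. lnorm e y = 1 \<and> lsub x (lmul e r y) \<in> PL v (s + int a)"
    using orbit_cover[where s = s and a = a] by blast
  have csa: "c - s = s + int a" using s2 by linarith
  have "\<forall>x. \<exists>k. \<exists>r\<in>R. \<forall>Phi\<in>B. Phi x = k * Phi r"
  proof
    fix x
    show "\<exists>k. \<exists>r\<in>R. \<forall>Phi\<in>B. Phi x = k * Phi r"
    proof (cases "x \<in> PL v s")
      case True
      then obtain r y where r: "r \<in> R" "lnorm e y = 1" "lsub x (lmul e r y) \<in> PL v (s + int a)"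
        using cov by blast
      have "\<forall>Phi\<in>B. Phi x = inverse (chi y) * Phi r"
        using C[of _ x "lmul e r y"] r csa D by simp
      then show ?thesis using r by blast
    next
      case False
      obtain r where "r \<in> R" using cov PL_0 by blast
      moreover have "\<forall>Phi\<in>B. Phi x = 0 * Phi r" using A False by (metis mult_zero_left)
      ultimately show ?thesis by blast
    qed
  qed
  then have "card B \<le> card R" using LA_bound[OF fB R(1) li] by blast
  then show "card B \<le> q ^ (if even (c - int n) then n else n - 1)"
    using R(2) by (simp add: a_def)
qed

end
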